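(* Let $n\ge 2$. Every $n$-dimensional non-nilpotent cyclic Leibniz algebra over $\mathbb{C}$ is of type $k$ for one and only one $k\in\{2,\ldots,n\}$.
   Context: A (left) Leibniz algebra is a vector space with a bilinear product such that $x(yz)=(xy)z+y(xz)$ for all $x,y,z$. A cyclic Leibniz algebra is a Leibniz algebra generated by a single element. For an element $x$ set $x^1=x$ and $x^{j+1}=x\,x^j$. In an $n$-dimensional cyclic Leibniz algebra, a generator is an element $x$ such that $\{x,\ldots,x^n\}$ is a basis; for a generator $a$ one always has $aa^n=\alpha_2a^2+\cdots+\alpha_na^n$ for some scalars (no $a$-term). The algebra is called non-nilpotent if a generator $a$ satisfies $aa^n\neq 0$, i.e. $aa^n=\alpha_ka^k+\alpha_{k+1}a^{k+1}+\cdots+\alpha_na^n$ with $2\le k\le n$ and $\alpha_k\neq0$. An $n$-dimensional non-nilpotent cyclic Leibniz algebra is said to be of type $k$ if it has a generator $x$ with $$xx^n=x^k+\gamma_{k+1}x^{k+1}+\cdots+\gamma_nx^n$$ for some $(\gamma_{k+1},\ldots,\gamma_n)\in\mathbb{C}^{n-k}$. *)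

theory Defs
  imports "HOL-Analysis.Analysis"
begin

definition bilinear_prod :: "(complex \<Rightarrow> 'v::ab_group_add \<Rightarrow> 'v) \<Rightarrow> ('v \<Rightarrow> 'v \<Rightarrow> 'v) \<Rightarrow> bool" where
  "bilinear_prod sc pr \<longleftrightarrow>
     (\<forall>x y z. pr (x + y) z = pr x z + pr y z) \<and>
     (\<forall>x y z. pr x (y + z) = pr x y + pr x z) \<and>
     (\<forall>c x y. pr (sc c x) y = sc c (pr x y)) \<and>
     (\<forall>c x y. pr x (sc c y) = sc c (pr x y))"

definition leibniz_algebra :: "(complex \<Rightarrow> 'v::ab_group_add \<Rightarrow> 'v) \<Rightarrow> ('v \<Rightarrow> 'v \<Rightarrow> 'v) \<Rightarrow> bool" where
  "leibniz_algebra sc pr \<longleftrightarrow>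
     vector_space sc \<and> bilinear_prod sc pr \<and>
     (\<forall>x y z. pr x (pr y z) = pr (pr x y) z + pr y (pr x z))"

definition gen_subalg :: "(complex \<Rightarrow> 'v::ab_group_add \<Rightarrow> 'v) \<Rightarrow> ('v \<Rightarrow> 'v \<Rightarrow> 'v) \<Rightarrow> 'v set \<Rightarrow> 'v set" where
  "gen_subalg sc pr S =
     \<Inter>{W. module.subspace sc W \<and> S \<subseteq> W \<and> (\<forall>a\<in>W. \<forall>b\<in>W. pr a b \<in> W)}"

definition cyclic :: "(complex \<Rightarrow> 'v::ab_group_add \<Rightarrow> 'v) \<Rightarrow> ('v \<Rightarrow> 'v \<Rightarrow> 'v) \<Rightarrow> bool" where
  "cyclic sc pr \<longleftrightarrow> (\<exists>x. gen_subalg sc pr {x} = UNIV)"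

text \<open>Left powers: lpow pr x j is x^j for j >= 1, with x^1 = x and x^(j+1) = x x^j.
  (The value at j = 0 is irrelevant and set to x.)\<close>
fun lpow :: "('v \<Rightarrow> 'v \<Rightarrow> 'v) \<Rightarrow> 'v \<Rightarrow> nat \<Rightarrow> 'v" where
  "lpow pr x 0 = x"
| "lpow pr x (Suc 0) = x"
| "lpow pr x (Suc (Suc j)) = pr x (lpow pr x (Suc j))"

definition generator :: "(complex \<Rightarrow> 'v::ab_group_add \<Rightarrow> 'v) \<Rightarrow> ('v \<Rightarrow> 'v \<Rightarrow> 'v) \<Rightarrow> nat \<Rightarrow> 'v \<Rightarrow> bool" where
  "generator sc pr n x \<longleftrightarrow>
     inj_on (lpow pr x) {1..n} \<and>
     \<not> module.dependent sc (lpow pr x ` {1..n}) \<and>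
     module.span sc (lpow pr x ` {1..n}) = UNIV"

definition non_nilpotent :: "(complex \<Rightarrow> 'v::ab_group_add \<Rightarrow> 'v) \<Rightarrow> ('v \<Rightarrow> 'v \<Rightarrow> 'v) \<Rightarrow> nat \<Rightarrow> bool" where
  "non_nilpotent sc pr n \<longleftrightarrow>
     (\<exists>a. generator sc pr n a \<and> pr a (lpow pr a n) \<noteq> 0)"

definition of_type :: "(complex \<Rightarrow> 'v::ab_group_add \<Rightarrow> 'v) \<Rightarrow> ('v \<Rightarrow> 'v \<Rightarrow> 'v) \<Rightarrow> nat \<Rightarrow> nat \<Rightarrow> bool" where
  "of_type sc pr n k \<longleftrightarrow>
     (\<exists>x \<gamma>. generator sc pr n x \<and>
        pr x (lpow pr x n) = lpow pr x k + (\<Sum>j\<in>{k+1..n}. sc (\<gamma> j) (lpow pr x j)))"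

end

theory Submission
  imports Defs
begin

lemma gen_indep:
  assumes V: "vector_space sc" and G: "generator sc pr n x"
    and S: "(\<Sum>j=1..n. sc (u j) (lpow pr x j)) = 0" and j: "j \<in> {1..n}"
  shows "u j = 0"
proof (rule ccontr)
  assume nz: "u j \<noteq> 0"
  interpret V: vector_space sc by (rule V)
  let ?g = "lpow pr x"
  have inj: "inj_on ?g {1..n}" and ind: "\<not> V.dependent (?g ` {1..n})"
    using G by (auto simp: generator_def)
  define w where "w = (\<lambda>v. u (inv_into {1..n} ?g v))"
  have wg: "w (?g l) = u l" if "l \<in> {1..n}" for l
    using inj that by (simp add: w_def)
  have "(\<Sum>v\<in>?g ` {1..n}. sc (w v) v) = (\<Sum>l\<in>{1..n}. sc (w (?g l)) (?g l))"
    by (rule sum.reindex[OF inj, unfolded comp_def])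
  also have "\<dots> = 0" using S by (simp add: wg)
  finally have "V.dependent (?g ` {1..n})"
    using wg[OF j] nz j by (subst V.dependent_finite) (auto intro!: exI[of _ w] bexI[of _ j])
  with ind show False by simp
qed

lemma gen_span:
  assumes V: "vector_space sc" and G: "generator sc pr n x"
  shows "\<exists>u. v = (\<Sum>j=1..n. sc (u j) (lpow pr x j))"
proof -
  interpret V: vector_space sc by (rule V)
  let ?g = "lpow pr x"
  have inj: "inj_on ?g {1..n}" and sp: "V.span (?g ` {1..n}) = UNIV"
    using G by (auto simp: generator_def)
  have "v \<in> V.span (?g ` {1..n})" using sp by simp
  then obtain w where "v = (\<Sum>v\<in>?g ` {1..n}. sc (w v) v)"
    by (auto simp: V.span_finite)
  also have "\<dots> = (\<Sum>l\<in>{1..n}. sc (w (?g l)) (?g l))"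
    by (rule sum.reindex[OF inj, unfolded comp_def])
  finally show ?thesis by (intro exI[of _ "\<lambda>l. w (?g l)"])
qed

lemma gen_intro:
  assumes V: "vector_space sc"
    and I: "\<And>u. (\<Sum>j=1..n. sc (u j) (lpow pr x j)) = 0 \<Longrightarrow> \<forall>j\<in>{1..n}. u j = 0"
    and Sp: "\<And>v. \<exists>u. v = (\<Sum>j=1..n. sc (u j) (lpow pr x j))"
  shows "generator sc pr n x"
proof -
  interpret V: vector_space sc by (rule V)
  let ?g = "lpow pr x"
  have inj: "inj_on ?g {1..n}"
  proof (rule inj_onI, rule ccontr)
    fix i j assume i: "i \<in> {1..n}" and j: "j \<in> {1..n}" and e: "?g i = ?g j" and ne: "i \<noteq> j"
    define u where "u = (\<lambda>l. if l = i then (1::complex) else if l = j then -1 else 0)"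
    have "(\<Sum>l=1..n. sc (u l) (?g l)) = (\<Sum>l=1..n. (if l = i then ?g i else 0) + (if l = j then - ?g j else 0))"
      by (rule sum.cong) (auto simp: u_def ne)
    also have "\<dots> = ?g i - ?g j" using i j by (simp add: sum.distrib)
    also have "\<dots> = 0" using e by simp
    finally have "u i = 0" using I i by blast
    then show False by (simp add: u_def)
  qed
  have ind: "\<not> V.dependent (?g ` {1..n})"
  proof
    assume "V.dependent (?g ` {1..n})"
    then obtain w v where v: "v \<in> ?g ` {1..n}" "w v \<noteq> 0" and s: "(\<Sum>v\<in>?g ` {1..n}. sc (w v) v) = 0"
      by (auto simp: V.dependent_finite)
    have "(\<Sum>l\<in>{1..n}. sc (w (?g l)) (?g l)) = 0"
      using s sum.reindex[OF inj, unfolded comp_def, of "\<lambda>v. sc (w v) v"] by simp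
    then have "\<forall>l\<in>{1..n}. w (?g l) = 0" using I[of "\<lambda>l. w (?g l)"] by blast
    with v show False by auto
  qed
  have sp: "V.span (?g ` {1..n}) = UNIV"
  proof -
    have "v \<in> V.span (?g ` {1..n})" for v
    proof -
    obtain u where "v = (\<Sum>j=1..n. sc (u j) (?g j))" using Sp by blast
    also have "\<dots> \<in> V.span (?g ` {1..n})"
      by (intro V.span_sum V.span_scale V.span_base) auto
    finally show "v \<in> V.span (?g ` {1..n})" .
  qed
  then show ?thesis by auto
  qed
  show ?thesis using inj ind sp by (simp add: generator_def)
qed


lemma complex_root_ex:
  fixes z :: complex assumes "z \<noteq> 0" "m > 0"
  shows "\<exists>w. w ^ m = z"
proof -
  have "exp (Ln z / of_nat m) ^ m = exp (of_nat m * (Ln z / of_nat m))"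
    by (rule exp_of_nat_mult[symmetric])
  also have "\<dots> = z" using assms by simp
  finally show ?thesis by blast
qed

lemma sum_indicator_scale:
  assumes V: "vector_space sc" and m: "m \<in> A" and fin: "finite A"
  shows "(\<Sum>j\<in>A. sc (if j = m then 1 else 0) (f j)) = f m"
proof -
  interpret V: vector_space sc by (rule V)
  have "(\<Sum>j\<in>A. sc (if j = m then 1 else 0) (f j)) = (\<Sum>j\<in>A. if j = m then f j else 0)"
    by (rule sum.cong) auto
  also have "\<dots> = f m" using m fin by simp
  finally show ?thesis .
qed

lemma sum_split_k:
  fixes k n :: nat
  assumes V: "vector_space sc" and k: "1 \<le> k" "k \<le> n"
    and z: "\<And>j. 1 \<le> j \<Longrightarrow> j < k \<Longrightarrow> g j = 0" and one: "g k = 1"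
  shows "(\<Sum>j=1..n. sc (g j) (f j)) = f k + (\<Sum>j=k+1..n. sc (g j) (f j))"
proof -
  interpret V: vector_space sc by (rule V)
  have "{1..n} = {1..<k} \<union> {k..n}" using k by auto
  then have "(\<Sum>j=1..n. sc (g j) (f j)) = (\<Sum>j\<in>{1..<k}. sc (g j) (f j)) + (\<Sum>j=k..n. sc (g j) (f j))"
    by (simp add: sum.union_disjoint ivl_disj_int)
  also have "(\<Sum>j\<in>{1..<k}. sc (g j) (f j)) = 0" by (rule sum.neutral) (auto simp: z)
  also have "(\<Sum>j=k..n. sc (g j) (f j)) = f k + (\<Sum>j=k+1..n. sc (g j) (f j))"
    using k by (simp add: sum.atLeast_Suc_atMost one)
  finally show ?thesis by simp
qed

lemma gen_nonzero:
  assumes V: "vector_space sc" and G: "generator sc pr n x" and j: "j \<in> {1..n}"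
  shows "lpow pr x j \<noteq> 0"
proof
  assume "lpow pr x j = 0"
  then have "(\<Sum>l=1..n. sc (if l = j then 1 else 0) (lpow pr x l)) = 0"
    using sum_indicator_scale[OF V j] by simp
  from gen_indep[OF V G this j] show False by simp
qed

lemma funpow_comm: "(f ^^ m) ((f ^^ l) v) = (f ^^ l) ((f ^^ m) v)"
  by (metis comp_apply funpow_add add.commute)

lemma lpow_funpow: "lpow pr x (Suc l) = (pr x ^^ l) x"
  by (induction l) auto

context
  fixes sc :: "complex \<Rightarrow> 'v::ab_group_add \<Rightarrow> 'v" and pr :: "'v \<Rightarrow> 'v \<Rightarrow> 'v"
  assumes L: "leibniz_algebra sc pr"
begin

lemma V: "vector_space sc" using L by (simp add: leibniz_algebra_def)

lemma padl: "pr (a + b) z = pr a z + pr b z"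
  and padr: "pr z (a + b) = pr z a + pr z b"
  and psl: "pr (sc c a) z = sc c (pr a z)"
  and psr: "pr z (sc c a) = sc c (pr z a)"
  using L unfolding leibniz_algebra_def bilinear_prod_def by blast+

lemma leib: "pr x (pr y z) = pr (pr x y) z + pr y (pr x z)"
  using L unfolding leibniz_algebra_def by blast

lemma p0l: "pr 0 z = 0" using padl[of 0 0 z] by simp
lemma p0r: "pr z 0 = 0" using padr[of z 0 0] by simp

lemma psuml: "pr (sum f A) z = (\<Sum>i\<in>A. pr (f i) z)"
  by (induct A rule: infinite_finite_induct) (simp_all add: padl p0l)

lemma ann: "2 \<le> j \<Longrightarrow> pr (lpow pr x j) z = 0"
proof (induction j arbitrary: z rule: nat_induct_at_least)
  case base
  have "pr x (pr x z) = pr (pr x x) z + pr x (pr x z)" by (rule leib)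
  then show ?case by (simp add: numeral_2_eq_2)
next
  case (Suc j)
  then obtain i where i: "j = Suc i" by (cases j) auto
  have "pr x (pr (lpow pr x j) z) = pr (pr x (lpow pr x j)) z + pr (lpow pr x j) (pr x z)" by (rule leib)
  then show ?case using Suc.IH by (simp add: i p0r)
qed

lemma Tlin_add: "(pr x ^^ l) (a + b) = (pr x ^^ l) a + (pr x ^^ l) b"
  by (induction l) (simp_all add: padr)
lemma Tlin_0: "(pr x ^^ l) 0 = 0"
  by (induction l) (simp_all add: p0r)
lemma Tlin_sc: "(pr x ^^ l) (sc c a) = sc c ((pr x ^^ l) a)"
  by (induction l) (simp_all add: psr)
lemma Tlin_sum: "(pr x ^^ l) (sum f A) = (\<Sum>i\<in>A. (pr x ^^ l) (f i))"
  by (induct A rule: infinite_finite_induct) (simp_all add: Tlin_add Tlin_0)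

lemma ypow:
  assumes "\<And>z. pr y z = sc c (pr x z)"
  shows "lpow pr y (Suc l) = sc (c ^ l) ((pr x ^^ l) y)"
proof (induction l)
  case 0 then show ?case using V by (simp add: vector_space_def module.scale_one)
next
  case (Suc l)
  interpret V: vector_space sc by (rule V)
  have "lpow pr y (Suc (Suc l)) = pr y (lpow pr y (Suc l))" by simp
  also have "\<dots> = sc c (pr x (sc (c ^ l) ((pr x ^^ l) y)))" using assms Suc by simp
  also have "\<dots> = sc (c ^ Suc l) ((pr x ^^ Suc l) y)" by (simp add: psr mult.commute)
  finally show ?case .
qed

lemma scpow:
  "lpow pr (sc c a) (Suc l) = sc (c ^ Suc l) (lpow pr a (Suc l))"
proof (induction l)
  case 0 then show ?case using V by (simp add: vector_space_def module.scale_one)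
next
  case (Suc l)
  interpret V: vector_space sc by (rule V)
  show ?case using Suc by (simp add: psl psr mult.commute)
qed

end


context
  fixes sc :: "complex \<Rightarrow> 'v::ab_group_add \<Rightarrow> 'v" and pr :: "'v \<Rightarrow> 'v \<Rightarrow> 'v"
  assumes L: "leibniz_algebra sc pr"
begin

lemma main_le:
  assumes n2: "2 \<le> n" and Gx: "generator sc pr n x" and Gy: "generator sc pr n y"
    and k: "1 \<le> k" "k \<le> n" and k': "1 \<le> k'" "k' \<le> n"
    and hx: "pr x (lpow pr x n) = lpow pr x k + (\<Sum>j\<in>{k+1..n}. sc (\<gamma> j) (lpow pr x j))"
    and hy: "pr y (lpow pr y n) = lpow pr y k' + (\<Sum>j\<in>{k'+1..n}. sc (\<delta> j) (lpow pr y j))"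
  shows "k' \<le> k"
proof -
  have V: "vector_space sc" by (rule V[OF L])
  interpret V: vector_space sc by (rule V)
  define a where "a j = (if j = k then 1 else if k < j then \<gamma> j else (0::complex))" for j
  define b where "b j = (if j = k' then 1 else if k' < j then \<delta> j else (0::complex))" for j
  have lx: "lpow pr x j = (pr x ^^ (j-1)) x" if "1 \<le> j" for j
    using lpow_funpow[of pr x "j-1"] that by simp
  obtain m where m: "n = Suc m" using n2 by (cases n) auto
  have sx: "lpow pr x (Suc n) = pr x (lpow pr x n)" for x by (simp add: m)
  have Ax: "(pr x ^^ n) x = (\<Sum>j=1..n. sc (a j) ((pr x ^^ (j-1)) x))"
  proof -
    have "(pr x ^^ n) x = pr x (lpow pr x n)" using lpow_funpow[of pr x n] sx by simp
    also have "\<dots> = lpow pr x k + (\<Sum>j\<in>{k+1..n}. sc (a j) (lpow pr x j))"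
      unfolding hx by (intro arg_cong2[where f="(+)"] refl sum.cong) (auto simp: a_def)
    also have "\<dots> = (\<Sum>j=1..n. sc (a j) (lpow pr x j))"
      by (rule sum_split_k[OF V k, symmetric]) (auto simp: a_def)
    also have "\<dots> = (\<Sum>j=1..n. sc (a j) ((pr x ^^ (j-1)) x))"
      by (rule sum.cong) (auto simp: lx)
    finally show ?thesis .
  qed
  obtain e where ye: "y = (\<Sum>i=1..n. sc (e i) (lpow pr x i))" using gen_span[OF V Gx] by blast
  have ye': "y = (\<Sum>i=1..n. sc (e i) ((pr x ^^ (i-1)) x))"
    unfolding ye by (rule sum.cong) (auto simp: lx)
  define c where "c = e 1"
  have pyz: "pr y z = sc c (pr x z)" for z
  proof -
    have "pr y z = (\<Sum>i=1..n. sc (e i) (pr (lpow pr x i) z))"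
      unfolding ye by (simp add: psuml[OF L] psl[OF L])
    also have "\<dots> = sc (e 1) (pr (lpow pr x 1) z) + (\<Sum>i=Suc 1..n. sc (e i) (pr (lpow pr x i) z))"
      using n2 by (simp add: sum.atLeast_Suc_atMost)
    also have "(\<Sum>i=Suc 1..n. sc (e i) (pr (lpow pr x i) z)) = 0"
      by (rule sum.neutral) (auto simp: ann[OF L])
    finally show ?thesis by (simp add: c_def)
  qed
  have c0: "c \<noteq> 0"
  proof
    assume "c = 0"
    then have "lpow pr y 2 = 0" using pyz[of y] by (simp add: numeral_2_eq_2)
    with gen_nonzero[OF V Gy, of 2] n2 show False by simp
  qed
  let ?T = "pr x"
  have Ay: "(?T ^^ n) y = (\<Sum>j=1..n. sc (a j) ((?T ^^ (j-1)) y))"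
  proof -
    have "(?T ^^ n) y = (\<Sum>i=1..n. sc (e i) ((?T ^^ (i-1)) ((?T ^^ n) x)))"
      by (subst ye') (simp add: Tlin_sum[OF L] Tlin_sc[OF L] funpow_comm)
    also have "\<dots> = (\<Sum>i=1..n. \<Sum>j=1..n. sc (a j) (sc (e i) ((?T ^^ (j-1)) ((?T ^^ (i-1)) x))))"
      unfolding Ax by (simp add: Tlin_sum[OF L] Tlin_sc[OF L] funpow_comm V.scale_sum_right mult.commute)
    also have "\<dots> = (\<Sum>j=1..n. \<Sum>i=1..n. sc (a j) (sc (e i) ((?T ^^ (j-1)) ((?T ^^ (i-1)) x))))"
      by (rule sum.swap)
    also have "\<dots> = (\<Sum>j=1..n. sc (a j) ((?T ^^ (j-1)) y))"
      by (subst ye') (simp add: Tlin_sum[OF L] Tlin_sc[OF L] V.scale_sum_right)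
    finally show ?thesis .
  qed
  have ypw: "(?T ^^ (j-1)) y = sc (inverse (c^(j-1))) (lpow pr y j)" if "1 \<le> j" for j
  proof -
    have "lpow pr y j = sc (c ^ (j-1)) ((?T ^^ (j-1)) y)"
      using ypow[OF L pyz, of "j-1"] that by simp
    then show ?thesis using c0 by simp
  qed
  have "(?T ^^ n) y = sc (inverse (c^n)) (lpow pr y (Suc n))"
    using ypw[of "Suc n"] by simp
  also have "\<dots> = sc (inverse (c^n)) (\<Sum>j=1..n. sc (b j) (lpow pr y j))"
  proof -
    have "lpow pr y (Suc n) = lpow pr y k' + (\<Sum>j\<in>{k'+1..n}. sc (b j) (lpow pr y j))"
      unfolding sx hy by (intro arg_cong2[where f="(+)"] refl sum.cong) (auto simp: b_def)
    also have "\<dots> = (\<Sum>j=1..n. sc (b j) (lpow pr y j))"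
      by (rule sum_split_k[OF V k', symmetric]) (auto simp: b_def)
    finally show ?thesis by simp
  qed
  finally have e1: "(?T ^^ n) y = (\<Sum>j=1..n. sc (inverse (c^n) * b j) (lpow pr y j))"
    by (simp add: V.scale_sum_right)
  have e2: "(?T ^^ n) y = (\<Sum>j=1..n. sc (a j * inverse (c^(j-1))) (lpow pr y j))"
    unfolding Ay
    apply (rule sum.cong, rule refl)
    subgoal for j using ypw[of j] by simp
    done
  define u where "u j = a j * inverse (c^(j-1)) - inverse (c^n) * b j" for j
  have "(\<Sum>j=1..n. sc (u j) (lpow pr y j)) = 0"
    using e1 e2 by (simp add: u_def V.scale_left_diff_distrib sum_subtractf)
  from gen_indep[OF V Gy this, of k] k have "u k = 0" by simp
  then have "inverse (c^(k-1)) = inverse (c^n) * b k" using k by (simp add: u_def a_def)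
  then have "b k \<noteq> 0" using c0 by auto
  then show ?thesis by (auto simp: b_def split: if_splits)
qed

end


theorem lemma3p3:
  fixes sc :: "complex \<Rightarrow> 'v::ab_group_add \<Rightarrow> 'v"
    and pr :: "'v \<Rightarrow> 'v \<Rightarrow> 'v"
    and n :: nat
  assumes "n \<ge> 2"
    and "leibniz_algebra sc pr"
    and "vector_space.dim sc UNIV = n"
    and "cyclic sc pr"
    and "non_nilpotent sc pr n"
  shows "\<exists>!k. k \<in> {2..n} \<and> of_type sc pr n k"
proof (rule ex_ex1I)
  note n2 = assms(1) and L = assms(2)
  have V: "vector_space sc" by (rule V[OF L])
  interpret V: vector_space sc by (rule V)
  obtain m where m: "n = Suc m" using n2 by (cases n) auto
  have sx: "lpow pr x (Suc n) = pr x (lpow pr x n)" for x by (simp add: m)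
  show "\<exists>k. k \<in> {2..n} \<and> of_type sc pr n k"
  proof -
    obtain a where Ga: "generator sc pr n a" and na: "pr a (lpow pr a n) \<noteq> 0"
      using assms(5) by (auto simp: non_nilpotent_def)
    obtain \<alpha> where ha: "pr a (lpow pr a n) = (\<Sum>j=1..n. sc (\<alpha> j) (lpow pr a j))"
      using gen_span[OF V Ga] by blast
    have \<alpha>1: "\<alpha> 1 = 0"
    proof -
      have "pr (pr a (lpow pr a n)) a = 0"
        unfolding sx[symmetric] by (rule ann[OF L]) (use n2 in simp)
      moreover have "pr (pr a (lpow pr a n)) a = sc (\<alpha> 1) (lpow pr a 2)"
      proof -
        have "pr (pr a (lpow pr a n)) a = (\<Sum>i=1..n. sc (\<alpha> i) (pr (lpow pr a i) a))"
          unfolding ha by (simp add: psuml[OF L] psl[OF L])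
        also have "\<dots> = sc (\<alpha> 1) (pr (lpow pr a 1) a) + (\<Sum>i=Suc 1..n. sc (\<alpha> i) (pr (lpow pr a i) a))"
          using n2 by (simp add: sum.atLeast_Suc_atMost)
        also have "(\<Sum>i=Suc 1..n. sc (\<alpha> i) (pr (lpow pr a i) a)) = 0"
          by (rule sum.neutral) (auto simp: ann[OF L])
        finally show ?thesis by (simp add: numeral_2_eq_2)
      qed
      moreover have "lpow pr a 2 \<noteq> 0" using gen_nonzero[OF V Ga, of 2] n2 by simp
      ultimately show ?thesis by simp
    qed
    define K where "K = {j\<in>{2..n}. \<alpha> j \<noteq> 0}"
    have Kne: "K \<noteq> {}"
    proof
      assume "K = {}"
      then have "\<alpha> j = 0" if "j \<in> {1..n}" for j
        using that \<alpha>1 by (cases "j = 1") (auto simp: K_def)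
      then have "pr a (lpow pr a n) = 0" unfolding ha by (intro sum.neutral) auto
      with na show False by simp
    qed
    have finK: "finite K" by (simp add: K_def)
    define k where "k = Min K"
    have kK: "k \<in> K" using Min_in[OF finK Kne] by (simp add: k_def)
    have kmin: "\<alpha> j = 0" if "1 \<le> j" "j < k" for j
    proof (cases "j = 1")
      case True then show ?thesis using \<alpha>1 by simp
    next
      case False
      have "j \<notin> K" using Min_le[OF finK, of j] that unfolding k_def by linarith
      then show ?thesis using False that kK by (auto simp: K_def)
    qed
    have k2: "2 \<le> k" "k \<le> n" and \<alpha>k: "\<alpha> k \<noteq> 0" using kK by (auto simp: K_def)
    obtain c where c: "c ^ (Suc n - k) = inverse (\<alpha> k)"
      using complex_root_ex[of "inverse (\<alpha> k)" "Suc n - k"] \<alpha>k k2 by auto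
    have c0: "c \<noteq> 0" using c \<alpha>k k2 by (cases "c = 0") (auto simp: zero_power)
    define x where "x = sc c a"
    have px: "lpow pr x j = sc (c ^ j) (lpow pr a j)" if "1 \<le> j" for j
      using scpow[OF L, of c a "j-1"] that by (simp add: x_def)
    have pa: "lpow pr a j = sc (inverse (c ^ j)) (lpow pr x j)" if "1 \<le> j" for j
      using px[OF that] c0 by simp
    have Gx: "generator sc pr n x"
    proof (rule gen_intro[OF V])
      fix u assume h: "(\<Sum>j=1..n. sc (u j) (lpow pr x j)) = 0"
      have "(\<Sum>j=1..n. sc (u j * c ^ j) (lpow pr a j)) = 0"
        unfolding h[symmetric] by (rule sum.cong) (auto simp: px)
      from gen_indep[OF V Ga this] c0 show "\<forall>j\<in>{1..n}. u j = 0" by auto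
    next
      fix v
      obtain w where "v = (\<Sum>j=1..n. sc (w j) (lpow pr a j))" using gen_span[OF V Ga] by blast
      also have "\<dots> = (\<Sum>j=1..n. sc (w j * inverse (c ^ j)) (lpow pr x j))"
        by (rule sum.cong) (auto simp: pa)
      finally show "\<exists>u. v = (\<Sum>j=1..n. sc (u j) (lpow pr x j))"
        by (intro exI[of _ "\<lambda>j. w j * inverse (c ^ j)"])
    qed
    define \<gamma> where "\<gamma> j = c ^ Suc n * \<alpha> j * inverse (c ^ j)" for j
    have \<gamma>k: "\<gamma> k = 1"
    proof -
      have "c ^ Suc n = c ^ (Suc n - k) * c ^ k" using k2 by (simp flip: power_add)
      then show ?thesis using c c0 \<alpha>k by (simp add: \<gamma>_def field_simps)
    qed
    have "pr x (lpow pr x n) = sc (c ^ Suc n) (pr a (lpow pr a n))"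
      using px[of "Suc n"] by (simp add: sx)
    also have "\<dots> = (\<Sum>j=1..n. sc (\<gamma> j) (lpow pr x j))"
      unfolding ha V.scale_sum_right
      by (rule sum.cong) (auto simp: pa \<gamma>_def mult.assoc)
    also have "\<dots> = lpow pr x k + (\<Sum>j=k+1..n. sc (\<gamma> j) (lpow pr x j))"
      by (rule sum_split_k[OF V]) (use k2 \<gamma>k in \<open>auto simp: \<gamma>_def kmin\<close>)
    finally have "of_type sc pr n k" unfolding of_type_def using Gx by blast
    then show ?thesis using k2 by auto
  qed
next
  fix k1 k2 assume h1: "k1 \<in> {2..n} \<and> of_type sc pr n k1" and h2: "k2 \<in> {2..n} \<and> of_type sc pr n k2"
  obtain x \<gamma> where x: "generator sc pr n x"
    "pr x (lpow pr x n) = lpow pr x k1 + (\<Sum>j\<in>{k1+1..n}. sc (\<gamma> j) (lpow pr x j))"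
    using h1 by (auto simp: of_type_def)
  obtain y \<delta> where y: "generator sc pr n y"
    "pr y (lpow pr y n) = lpow pr y k2 + (\<Sum>j\<in>{k2+1..n}. sc (\<delta> j) (lpow pr y j))"
    using h2 by (auto simp: of_type_def)
  have "k2 \<le> k1" by (rule main_le[OF assms(2) assms(1) x(1) y(1) _ _ _ _ x(2) y(2)]) (use h1 h2 in auto)
  moreover have "k1 \<le> k2" by (rule main_le[OF assms(2) assms(1) y(1) x(1) _ _ _ _ y(2) x(2)]) (use h1 h2 in auto)
  ultimately show "k1 = k2" by simp
qed

end
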